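(* Assume $B$ is connected. Let $\varphi\colon A\to B$ be a $\mathbb{K}$-linear map and suppose there is $N\in\mathbb{N}$ such that for every $a\in A$ the series $R_\varphi(a,z)$ is a polynomial in $z$ of degree at most $N$ (i.e. $\psi_k(a)=0$ for all $k>N$ and all $a$). Then $\varphi(1)=n\cdot 1_B$ for some integer $n$ with $0\le n\le N$; for every $a\in A$ the polynomial $R_\varphi(a,z)$ has degree at most $n$; and $R_\varphi(1,z)=(1+z)^n$, so the degree is exactly $n$ for $a=1$. Moreover, for every $a\in A$, $R_\varphi(a,z)=z^n\bigl(1+\sum_{k=1}^{n}\psi_k(z^{-1}\cdot 1+a-1)\bigr)$ as polynomials/Laurent polynomials in $z$.
   Context: $\mathbb{K}=\mathbb{R}$ or $\mathbb{C}$; $A$ and $B$ are commutative associative unital $\mathbb{K}$-algebras. For a $\mathbb{K}$-linear map $\varphi\colon A\to B$ and $a\in A$, the characteristic function is $R_\varphi(a,z)=\exp\bigl(\varphi(\ln(1+az))\bigr)\in B[[z]]$, with $\ln(1+az)=\sum_{k\ge1}(-1)^{k+1}a^kz^k/k$, $\varphi$ applied coefficientwise; write $R_\varphi(a,z)=1+\sum_{k\ge1}\psi_k(a)z^k$. Each $\psi_k(a)$ is a universal polynomial in $\varphi(a),\varphi(a^2),\dots,\varphi(a^k)$, homogeneous of degree $k$ in $a$. The algebra $B$ is called connected if for every $b\in B$ and every $k\ge0$, $b(b-1)(b-2)\cdots(b-k)=0$ implies $b=j\cdot 1_B$ for some $j\in\{0,1,\dots,k\}$ (e.g. any $B$ without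 zero divisors). *)

theory Defs
  imports Complex_Main "HOL-Computational_Algebra.Formal_Power_Series"
begin

definition ln1p_fps :: "'a::real_algebra_1 \<Rightarrow> 'a fps" where
  "ln1p_fps a = Abs_fps (\<lambda>k. if k = 0 then 0
       else ((-1) ^ (k + 1) / real k) *\<^sub>R a ^ k)"

definition coeffwise :: "('a \<Rightarrow> 'b) \<Rightarrow> 'a fps \<Rightarrow> 'b fps" where
  "coeffwise f F = Abs_fps (\<lambda>k. f (fps_nth F k))"

text \<open>Exponential of a power series with zero constant term:
  exp F = sum_m F^m / m!, which is a finite sum in every coefficient.\<close>
definition exp_fps0 :: "'b::{real_algebra_1, comm_ring_1} fps \<Rightarrow> 'b fps" where
  "exp_fps0 F = Abs_fps (\<lambda>k. \<Sum>m\<le>k. (1 / fact m) *\<^sub>R fps_nth (F ^ m) k)"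

definition charR :: "('a::real_algebra_1 \<Rightarrow> 'b::{real_algebra_1, comm_ring_1}) \<Rightarrow> 'a \<Rightarrow> 'b fps" where
  "charR \<phi> a = exp_fps0 (coeffwise \<phi> (ln1p_fps a))"

definition psi :: "('a::real_algebra_1 \<Rightarrow> 'b::{real_algebra_1, comm_ring_1}) \<Rightarrow> nat \<Rightarrow> 'a \<Rightarrow> 'b" where
  "psi \<phi> k a = fps_nth (charR \<phi> a) k"

definition connected_alg :: "'b::comm_ring_1 itself \<Rightarrow> bool" where
  "connected_alg _ \<longleftrightarrow> (\<forall>(b::'b) (k::nat). (\<Prod>j\<le>k. b - of_nat j) = 0 \<longrightarrow>
       (\<exists>j\<le>k. b = of_nat j))"

end

theory Submission imports Defs "HOL-Computational_Algebra.Polynomial_FPS" begin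
unbundle fps_syntax

instantiation poly :: ("{real_algebra_1,comm_ring_1}") real_vector
begin
definition scaleR_poly_def: "scaleR r p = smult (of_real r) p"
instance by standard (simp_all add: scaleR_poly_def smult_add_right smult_add_left)
end

instance poly :: ("{real_algebra_1,comm_ring_1}") real_algebra_1
  by standard (simp_all add: scaleR_poly_def)

lemma of_real_poly: "(of_real r :: 'a::{real_algebra_1,comm_ring_1} poly) = [:of_real r:]"
  by (simp add: of_real_def scaleR_poly_def)

lemma of_real_poly_mult: "(of_real r :: 'a::{real_algebra_1,comm_ring_1} poly) * p = smult (of_real r) p"
  by (simp add: of_real_poly)

lemma poly_scaleR: "poly (r *\<^sub>R p) x = r *\<^sub>R poly p (x::'a::{real_algebra_1,comm_ring_1})"
  by (simp add: scaleR_poly_def scaleR_conv_of_real)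

lemma exp_fps0_nth0: "exp_fps0 F $ 0 = 1"
  by (simp add: exp_fps0_def)

lemma exp_fps0_trunc:
  assumes F0: "F $ 0 = 0" and kM: "k \<le> M"
  shows "exp_fps0 F $ k = (\<Sum>m\<le>M. (1 / fact m) *\<^sub>R (F ^ m) $ k)"
  unfolding exp_fps0_def fps_nth_Abs_fps
  by (rule sum.mono_neutral_left) (use kM startsby_zero_power_prefix[OF F0] in auto)

definition Sx :: "nat \<Rightarrow> 'c::{real_algebra_1,comm_ring_1} fps \<Rightarrow> 'c fps" where
  "Sx M F = (\<Sum>m\<le>M. fps_const (of_real (1 / fact m)) * F ^ m)"

lemma Sx_nth: "Sx M F $ k = (\<Sum>m\<le>M. (1 / fact m) *\<^sub>R (F ^ m) $ k)"
  by (simp add: Sx_def fps_sum_nth scaleR_conv_of_real)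

lemma exp_deriv_gen:
  fixes d :: "'c::{real_algebra_1,comm_ring_1} fps \<Rightarrow> 'c fps"
  assumes add: "\<And>F G. d (F + G) = d F + d G"
    and cmul: "\<And>r F. d (fps_const (of_real r) * F) = fps_const (of_real r) * d F"
    and leib: "\<And>F G. d (F * G) = F * d G + G * d F"
    and loc: "\<And>F G k. (\<And>j. j \<le> Suc k \<Longrightarrow> F $ j = G $ j) \<Longrightarrow> d F $ k = d G $ k"
    and F0: "F $ 0 = 0"
  shows "d (exp_fps0 F) = d F * exp_fps0 F"
proof -
  have d0: "d 0 = 0" using add[of 0 0] by simp
  have d1: "d 1 = 0" using leib[of 1 1] by simp
  have dpow: "d (F ^ m) = of_nat m * F ^ (m - 1) * d F" for m
  proof (induction m)
    case 0 then show ?case by (simp add: d1)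
  next
    case (Suc m)
    show ?case
    proof (cases m)
      case 0 then show ?thesis using leib[of F 1] d1 by simp
    next
      case (Suc m')
      then show ?thesis using Suc.IH leib[of F "F ^ m"] by (simp add: algebra_simps)
    qed
  qed
  have dsum: "d (sum f A) = (\<Sum>x\<in>A. d (f x))" for f :: "nat \<Rightarrow> _" and A
    by (induction A rule: infinite_finite_induct) (simp_all add: d0 add)
  have dS: "d (Sx (Suc K) F) = d F * Sx K F" for K
  proof -
    have "d (Sx (Suc K) F) = (\<Sum>m\<le>Suc K. fps_const (of_real (1 / fact m)) * (of_nat m * F ^ (m - 1) * d F))"
      by (simp only: Sx_def dsum cmul dpow)
    also have "\<dots> = (\<Sum>m\<le>K. fps_const (of_real (1 / fact (Suc m))) * (of_nat (Suc m) * F ^ m * d F))"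
      by (subst sum.atMost_Suc_shift) simp
    also have "\<dots> = (\<Sum>m\<le>K. d F * (fps_const (of_real (1 / fact m)) * F ^ m))"
    proof (rule sum.cong[OF refl])
      fix m
      have e: "(of_real (1 / fact (Suc m)) :: 'c) * of_nat (Suc m) = of_real (1 / fact m)"
      proof -
        have "(1 / fact (Suc m)) * real (Suc m) = 1 / fact m"
          by (simp add: field_simps del: of_nat_Suc)
        then show ?thesis by (metis of_real_mult of_real_of_nat_eq)
      qed
      have "fps_const (of_real (1 / fact (Suc m))) * (of_nat (Suc m) :: 'c fps) = fps_const (of_real (1 / fact m))"
        by (simp only: fps_of_nat[symmetric] fps_const_mult e)
      then show "fps_const (of_real (1 / fact (Suc m))) * (of_nat (Suc m) * F ^ m * d F) = d F * (fps_const (of_real (1 / fact m)) * F ^ m)"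
        by (metis (no_types, lifting) mult.assoc mult.commute)
    qed
    also have "\<dots> = d F * Sx K F" by (simp add: Sx_def sum_distrib_left)
    finally show ?thesis .
  qed
  show ?thesis
  proof (rule fps_ext)
    fix k
    have "d (exp_fps0 F) $ k = d (Sx (Suc k) F) $ k"
      by (rule loc) (simp add: Sx_nth exp_fps0_trunc[OF F0])
    also have "\<dots> = (d F * Sx k F) $ k" by (simp add: dS)
    also have "\<dots> = (d F * exp_fps0 F) $ k"
      unfolding fps_mult_nth Sx_nth
      by (rule sum.cong[OF refl]) (simp add: exp_fps0_trunc[OF F0, of _ k])
    finally show "d (exp_fps0 F) $ k = (d F * exp_fps0 F) $ k" .
  qed
qed


lemma exp_fps_deriv:
  fixes F :: "'c::{real_algebra_1,comm_ring_1} fps"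
  assumes "F $ 0 = 0"
  shows "fps_deriv (exp_fps0 F) = fps_deriv F * exp_fps0 F"
  by (rule exp_deriv_gen) (simp_all add: assms fps_deriv_mult mult.commute)

lemma of_nat_mult_scaleR: "(of_nat m :: 'c::real_algebra_1) * x = real m *\<^sub>R x"
  by (simp add: scaleR_conv_of_real)

lemma of_nat_cancel:
  fixes x :: "'c::real_algebra_1"
  assumes "of_nat (Suc m) * x = 0" shows "x = 0"
proof -
  have "real (Suc m) *\<^sub>R x = 0" using assms by (simp only: of_nat_mult_scaleR)
  then show ?thesis by simp
qed

lemma of_nat_cancel2:
  fixes x :: "'c::real_algebra_1"
  assumes "of_nat (Suc m) * x = of_nat (Suc m) * y" shows "x = y"
  using of_nat_cancel[of m "x - y"] assms by (simp add: algebra_simps)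

context
  fixes \<phi> :: "'a::{real_algebra_1, comm_ring_1} \<Rightarrow> 'b::{real_algebra_1, comm_ring_1}"
  assumes lin: "linear \<phi>"
begin

lemma phi_add: "\<phi> (x + y) = \<phi> x + \<phi> y" using lin by (rule linear_add)
lemma phi_scale: "\<phi> (r *\<^sub>R x) = r *\<^sub>R \<phi> x" using lin by (rule linear_scale)
lemma phi_0: "\<phi> 0 = 0" using lin by (rule linear_0)

lemma L_nth: "coeffwise \<phi> (ln1p_fps c) $ k = (if k = 0 then 0 else ((-1) ^ (k + 1) / real k) *\<^sub>R \<phi> (c ^ k))"
proof (cases "k = 0")
  case True then show ?thesis by (simp add: coeffwise_def ln1p_fps_def phi_0)
next
  case False
  then show ?thesis unfolding coeffwise_def ln1p_fps_def fps_nth_Abs_fps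
    by (simp only: \<open>k \<noteq> 0\<close> if_False phi_scale)
qed

lemma L_deriv_nth: "fps_deriv (coeffwise \<phi> (ln1p_fps c)) $ k = (-1) ^ k *\<^sub>R \<phi> (c ^ (k + 1))"
proof -
  have "fps_deriv (coeffwise \<phi> (ln1p_fps c)) $ k = (real (k+1) * ((-1) ^ (k + 2) / real (k + 1))) *\<^sub>R \<phi> (c ^ (k + 1))"
    by (simp only: fps_deriv_nth L_nth of_nat_mult_scaleR scaleR_scaleR) simp
  also have "real (k+1) * ((-1) ^ (k + 2) / real (k + 1)) = (-1) ^ k" by simp
  finally show ?thesis .
qed

lemma L0: "coeffwise \<phi> (ln1p_fps c) $ 0 = 0" by (simp add: L_nth)

lemma R_deriv: "fps_deriv (charR \<phi> c) = fps_deriv (coeffwise \<phi> (ln1p_fps c)) * charR \<phi> c"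
  unfolding charR_def by (rule exp_fps_deriv) (rule L0)

lemma L1_ode: "(1 + fps_X) * fps_deriv (coeffwise \<phi> (ln1p_fps 1)) = fps_const (\<phi> 1)"
proof (rule fps_ext)
  fix k
  show "((1 + fps_X) * fps_deriv (coeffwise \<phi> (ln1p_fps 1))) $ k = fps_const (\<phi> 1) $ k"
  proof (cases k)
    case 0 then show ?thesis by (simp add: distrib_right L_deriv_nth del: fps_deriv_nth)
  next
    case (Suc j)
    then show ?thesis by (simp add: distrib_right L_deriv_nth del: fps_deriv_nth)
  qed
qed

lemma R1_ode: "(1 + fps_X) * fps_deriv (charR \<phi> 1) = fps_const (\<phi> 1) * charR \<phi> 1"
  by (simp add: R_deriv L1_ode[symmetric] mult.assoc)

end

lemma ode_rec:
  fixes G :: "'c::{real_algebra_1,comm_ring_1} fps"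
  assumes "(1 + fps_X) * fps_deriv G = fps_const b * G"
  shows "of_nat (Suc k) * G $ Suc k = (b - of_nat k) * G $ k"
proof -
  have "((1 + fps_X) * fps_deriv G) $ k = (fps_const b * G) $ k" using assms by simp
  then have "of_nat (Suc k) * G $ Suc k + of_nat k * G $ k = b * G $ k"
    by (cases k) (simp_all add: distrib_right algebra_simps)
  then show ?thesis by (simp add: algebra_simps)
qed

lemma ode_unique:
  fixes G H :: "'c::{real_algebra_1,comm_ring_1} fps"
  assumes "(1 + fps_X) * fps_deriv G = fps_const b * G"
    and "(1 + fps_X) * fps_deriv H = fps_const b * H"
    and "G $ 0 = H $ 0"
  shows "G = H"
proof (rule fps_ext)
  fix k show "G $ k = H $ k"
  proof (induction k)
    case 0 then show ?case using assms(3) .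
  next
    case (Suc k)
    have "of_nat (Suc k) * G $ Suc k = of_nat (Suc k) * H $ Suc k"
      using ode_rec[OF assms(1), of k] ode_rec[OF assms(2), of k] Suc by simp
    then show ?case by (rule of_nat_cancel2)
  qed
qed

lemma ode_closed:
  fixes G :: "'c::{real_algebra_1,comm_ring_1} fps"
  assumes "(1 + fps_X) * fps_deriv G = fps_const b * G" and "G $ 0 = 1"
  shows "of_nat (fact k) * G $ k = (\<Prod>j<k. b - of_nat j)"
proof (induction k)
  case 0 then show ?case using assms(2) by simp
next
  case (Suc k)
  have "of_nat (fact (Suc k)) * G $ Suc k = of_nat (fact k) * (of_nat (Suc k) * G $ Suc k)"
    by (simp only: fact_Suc of_nat_mult of_nat_id mult.assoc mult.commute mult.left_commute)
  also have "\<dots> = (b - of_nat k) * (of_nat (fact k) * G $ k)"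
    by (simp only: ode_rec[OF assms(1)] mult.assoc mult.commute mult.left_commute)
  also have "\<dots> = (\<Prod>j<Suc k. b - of_nat j)" by (simp only: prod.lessThan_Suc Suc.IH mult.commute[of _ "b - of_nat k"])
  finally show ?case .
qed

lemma binom_ode: "(1 + fps_X) * fps_deriv ((1 + fps_X) ^ n) = fps_const (of_nat n :: 'c::comm_ring_1) * (1 + fps_X) ^ n"
proof (cases n)
  case 0 then show ?thesis by simp
next
  case (Suc m)
  have "fps_deriv ((1 + fps_X :: 'c fps) ^ n) = of_nat n * fps_deriv (1 + fps_X) * (1 + fps_X) ^ (n - 1)"
    by (rule fps_deriv_power')
  also have "fps_deriv (1 + fps_X :: 'c fps) = 1" by simp
  finally have "fps_deriv ((1 + fps_X) ^ n) = of_nat n * (1 + fps_X :: 'c fps) ^ m"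
    by (simp add: Suc)
  then have "(1 + fps_X) * fps_deriv ((1 + fps_X) ^ n) = of_nat n * (1 + fps_X :: 'c fps) ^ n"
    by (simp add: Suc mult_ac)
  then show ?thesis by (simp add: fps_of_nat)
qed


lemma fps_one_nth': "(1 :: 'c::comm_ring_1 fps) $ j = (if j = 0 then 1 else 0)"
  by simp

lemma exp_hom:
  fixes h :: "'c::{real_algebra_1,comm_ring_1} \<Rightarrow> 'd::{real_algebra_1,comm_ring_1}"
  assumes add: "\<And>x y. h (x + y) = h x + h y" and mult: "\<And>x y. h (x * y) = h x * h y"
    and one: "h 1 = 1" and sc: "\<And>r x. h (r *\<^sub>R x) = r *\<^sub>R h x"
  shows "h (exp_fps0 F $ k) = exp_fps0 (Abs_fps (\<lambda>i. h (F $ i))) $ k"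
proof -
  have h0: "h 0 = 0" using add[of 0 0] by simp
  have hsum: "h (sum f A) = (\<Sum>x\<in>A. h (f x))" for f :: "nat \<Rightarrow> _" and A
    by (induction A rule: infinite_finite_induct) (simp_all add: h0 add)
  have hpow: "h ((F ^ m) $ j) = (Abs_fps (\<lambda>i. h (F $ i)) ^ m) $ j" for m j
  proof (induction m arbitrary: j)
    case 0 then show ?case by (simp add: one h0)
  next
    case (Suc m)
    show ?case by (simp add: fps_mult_nth hsum mult Suc)
  qed
  show ?thesis by (simp add: exp_fps0_def hsum sc hpow)
qed

lemma poly_shift_power: "poly ([:a, 1:] ^ i) x = (a + x) ^ i"
  by (simp add: poly_power)

context
  fixes \<phi> :: "'a::{real_algebra_1, comm_ring_1} \<Rightarrow> 'b::{real_algebra_1, comm_ring_1}"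
  assumes lin: "linear \<phi>"
begin

lemma phi0': "\<phi> 0 = 0" using lin by (rule linear_0)
lemma phi_add': "\<phi> (x + y) = \<phi> x + \<phi> y" using lin by (rule linear_add)
lemma phi_scale': "\<phi> (r *\<^sub>R x) = r *\<^sub>R \<phi> x" using lin by (rule linear_scale)

lemma lin_lift: "linear (map_poly \<phi>)"
proof (rule linearI)
  fix p q show "map_poly \<phi> (p + q) = map_poly \<phi> p + map_poly \<phi> q"
    by (rule poly_eqI) (simp add: coeff_map_poly phi0' phi_add')
next
  fix r p show "map_poly \<phi> (r *\<^sub>R p) = r *\<^sub>R map_poly \<phi> p"
    by (rule poly_eqI) (simp add: coeff_map_poly phi0' scaleR_poly_def phi_scale' flip: scaleR_conv_of_real)
qed

lemma poly_map_phi: "poly (map_poly \<phi> p) (of_real s) = \<phi> (poly p (of_real s))"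
proof (induction p)
  case (pCons c p)
  have "\<phi> (c + of_real s * poly p (of_real s)) = \<phi> c + of_real s * \<phi> (poly p (of_real s))"
    by (simp add: phi_add' phi_scale' flip: scaleR_conv_of_real)
  then show ?case by (simp add: map_poly_pCons phi0' pCons.IH)
qed (simp add: phi0')

lemma psi_shift: "poly (psi (map_poly \<phi>) k [:a, 1:]) (of_real s) = psi \<phi> k (a + of_real s)"
proof -
  have "poly (psi (map_poly \<phi>) k [:a, 1:]) (of_real s)
      = exp_fps0 (Abs_fps (\<lambda>i. poly (coeffwise (map_poly \<phi>) (ln1p_fps [:a, 1:]) $ i) (of_real s))) $ k"
    unfolding psi_def charR_def
    by (rule exp_hom) (simp_all add: poly_scaleR)
  also have "Abs_fps (\<lambda>i. poly (coeffwise (map_poly \<phi>) (ln1p_fps [:a, 1:]) $ i) (of_real s))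
      = coeffwise \<phi> (ln1p_fps (a + of_real s))"
    by (rule fps_ext) (simp add: L_nth[OF lin_lift] L_nth[OF lin] poly_map_phi poly_scaleR poly_shift_power phi_scale')
  finally show ?thesis by (simp add: psi_def charR_def)
qed

end

definition pdv :: "'c::comm_ring_1 poly \<Rightarrow> 'c poly" where
  "pdv p = Abs_poly (\<lambda>n. of_nat (Suc n) * coeff p (Suc n))"

lemma coeff_pdv: "coeff (pdv p) n = of_nat (Suc n) * coeff p (Suc n)"
proof -
  have "coeff (pdv p) = (\<lambda>n. of_nat (Suc n) * coeff p (Suc n))"
    unfolding pdv_def by (rule coeff_Abs_poly[of "degree p"]) (simp add: coeff_eq_0)
  then show ?thesis by simp
qed

lemma fps_pdv: "fps_of_poly (pdv p) = fps_deriv (fps_of_poly p)"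
  by (rule fps_ext) (simp add: coeff_pdv)

lemma pdv_via_fps: "fps_of_poly q = fps_deriv (fps_of_poly p) \<Longrightarrow> pdv p = q"
  by (simp add: fps_pdv flip: fps_of_poly_eq_iff)

lemma pdv_add: "pdv (p + q) = pdv p + pdv q"
  by (rule pdv_via_fps) (simp add: fps_of_poly_add fps_pdv)

lemma pdv_diff: "pdv (p - q) = pdv p - pdv q"
  by (rule pdv_via_fps) (simp add: fps_of_poly_diff fps_pdv)

lemma pdv_mult: "pdv (p * q) = p * pdv q + q * pdv p"
  by (rule pdv_via_fps) (simp add: fps_of_poly_add fps_of_poly_mult fps_pdv fps_deriv_mult algebra_simps)

lemma pdv_smult: "pdv (smult c p) = smult c (pdv p)"
  by (rule poly_eqI) (simp add: coeff_pdv algebra_simps)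

lemma pdv_0: "pdv 0 = 0"
  by (rule poly_eqI) (simp add: coeff_pdv)

lemma pdv_sum: "pdv (sum f A) = (\<Sum>x\<in>A. pdv (f x))"
  by (induction A rule: infinite_finite_induct) (simp_all add: pdv_add pdv_0)

lemma fps_of_poly_of_nat: "fps_of_poly (of_nat n :: 'c::comm_ring_1 poly) = of_nat n"
  by (induction n) (simp_all add: fps_of_poly_add)

lemma pdv_const: "pdv [:c:] = 0"
  by (rule poly_eqI) (simp add: coeff_pdv)

lemma pdv_shift: "pdv [:a, 1:] = 1"
  by (rule poly_eqI) (simp add: coeff_pdv coeff_pCons split: nat.split)

lemma pdv_power: "pdv (p ^ n) = of_nat n * p ^ (n - 1) * pdv p"
  by (rule pdv_via_fps) (simp add: fps_of_poly_mult fps_of_poly_power fps_pdv fps_deriv_power' fps_of_poly_of_nat mult_ac)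

lemma pdv_monom: "pdv (monom c n) = monom (of_nat n * c) (n - 1)"
  by (cases n) (auto intro!: poly_eqI simp add: coeff_pdv coeff_monom)

definition pd :: "'c::comm_ring_1 poly fps \<Rightarrow> 'c poly fps" where
  "pd F = Abs_fps (\<lambda>k. pdv (F $ k))"

lemma pd_exp:
  fixes F :: "'c::{real_algebra_1,comm_ring_1} poly fps"
  assumes "F $ 0 = 0"
  shows "pd (exp_fps0 F) = pd F * exp_fps0 F"
proof (rule exp_deriv_gen)
  fix F G :: "'c poly fps"
  show "pd (F + G) = pd F + pd G" by (rule fps_ext) (simp add: pd_def pdv_add)
  show "pd (F * G) = F * pd G + G * pd F"
  proof -
    have "pd (F * G) = F * pd G + pd F * G"
    proof (rule fps_ext)
      fix n
      have "pd (F * G) $ n = (\<Sum>i=0..n. pdv (F $ i * G $ (n - i)))"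
        by (simp add: pd_def fps_mult_nth pdv_sum)
      also have "\<dots> = (\<Sum>i=0..n. F $ i * pd G $ (n - i)) + (\<Sum>i=0..n. pd F $ i * G $ (n - i))"
        by (simp add: pd_def pdv_mult sum.distrib mult.commute)
      finally show "pd (F * G) $ n = (F * pd G + pd F * G) $ n" by (simp add: fps_mult_nth)
    qed
    then show ?thesis by (simp add: mult.commute)
  qed
next
  fix r and F :: "'c poly fps"
  show "pd (fps_const (of_real r) * F) = fps_const (of_real r) * pd F"
    by (rule fps_ext) (simp add: pd_def of_real_poly_mult pdv_smult)
next
  fix F G :: "'c poly fps" and k
  assume "\<And>j. j \<le> Suc k \<Longrightarrow> F $ j = G $ j"
  then show "pd F $ k = pd G $ k" by (simp add: pd_def)
qed (rule assms)


context
  fixes \<phi> :: "'a::{real_algebra_1, comm_ring_1} \<Rightarrow> 'b::{real_algebra_1, comm_ring_1}"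
  assumes lin: "linear \<phi>"
begin

lemma pdv_map: "pdv (map_poly \<phi> p) = map_poly \<phi> (pdv p)"
  by (rule poly_eqI) (simp only: coeff_map_poly[of \<phi>, OF phi0'[OF lin]] coeff_pdv of_nat_mult_scaleR phi_scale'[OF lin])

lemma pd_Lt: "pd (coeffwise (map_poly \<phi>) (ln1p_fps [:a, 1:]))
   = fps_const (map_poly \<phi> 1) * fps_X - fps_X ^ 2 * fps_deriv (coeffwise (map_poly \<phi>) (ln1p_fps [:a, 1:]))"
proof (rule fps_ext)
  fix k
  let ?L = "coeffwise (map_poly \<phi>) (ln1p_fps [:a, 1:])"
  have lin2: "linear (map_poly \<phi>)" by (rule lin_lift[OF lin])
  have pdk: "pd ?L $ k = (if k = 0 then 0 else ((-1) ^ (k + 1) / real k * real k) *\<^sub>R map_poly \<phi> ([:a, 1:] ^ (k - 1)))"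
  proof -
    have "pd ?L $ k = pdv (if k = 0 then 0 else ((-1) ^ (k + 1) / real k) *\<^sub>R map_poly \<phi> ([:a, 1:] ^ k))"
      by (simp only: pd_def fps_nth_Abs_fps L_nth[OF lin2])
    also have "\<dots> = (if k = 0 then 0 else ((-1) ^ (k + 1) / real k * real k) *\<^sub>R map_poly \<phi> ([:a, 1:] ^ (k - 1)))"
    proof (cases "k = 0")
      case True then show ?thesis by (simp add: pdv_0)
    next
      case False
      have "pdv (((-1) ^ (k + 1) / real k) *\<^sub>R map_poly \<phi> ([:a, 1:] ^ k))
          = ((-1) ^ (k + 1) / real k) *\<^sub>R map_poly \<phi> (pdv ([:a, 1:] ^ k))"
        by (simp only: scaleR_poly_def pdv_smult pdv_map)
      also have "pdv ([:a, 1:] ^ k) = real k *\<^sub>R [:a, 1:] ^ (k - 1)"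
        by (simp add: pdv_power pdv_shift of_nat_mult_scaleR)
      also have "((-1) ^ (k + 1) / real k) *\<^sub>R map_poly \<phi> (real k *\<^sub>R [:a, 1:] ^ (k - 1))
          = ((-1) ^ (k + 1) / real k * real k) *\<^sub>R map_poly \<phi> ([:a, 1:] ^ (k - 1))"
        by (simp only: linear_scale[OF lin2] scaleR_scaleR)
      finally show ?thesis using False by simp
    qed
    finally show ?thesis .
  qed
  show "pd ?L $ k = (fps_const (map_poly \<phi> 1) * fps_X - fps_X ^ 2 * fps_deriv ?L) $ k"
  proof (cases k)
    case 0 then show ?thesis using pdk by (simp add: fps_X_power_mult_nth)
  next
    case (Suc j)
    show ?thesis
    proof (cases j)
      case 0 then show ?thesis using Suc pdk by (simp add: fps_X_power_mult_nth)
    next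
      case (Suc i)
      have d: "fps_deriv ?L $ i = (-1) ^ i *\<^sub>R map_poly \<phi> ([:a, 1:] ^ (i + 1))"
        by (rule L_deriv_nth[OF lin2])
      have r: "(-1) ^ (k + 1) / real k * real k = - ((-1) ^ i :: real)"
        using \<open>k = Suc j\<close> Suc by simp
      have km: "k - 1 = i + 1" "k \<noteq> 0" using \<open>k = Suc j\<close> Suc by simp_all
      have pk: "pd ?L $ k = (- ((-1) ^ i :: real)) *\<^sub>R map_poly \<phi> ([:a, 1:] ^ (i + 1))"
        by (simp only: pdk km r if_False)
      have rk: "(fps_const (map_poly \<phi> 1) * fps_X - fps_X ^ 2 * fps_deriv ?L) $ k = - (fps_deriv ?L $ i)"
        using \<open>k = Suc j\<close> Suc by (simp add: fps_X_power_mult_nth del: fps_deriv_nth)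
      show ?thesis by (simp only: pk rk d scaleR_minus_left)
    qed
  qed
qed

lemma P_rec: "pdv (psi (map_poly \<phi>) (Suc k) [:a, 1:])
   = map_poly \<phi> 1 * psi (map_poly \<phi>) k [:a, 1:] - of_nat k * psi (map_poly \<phi>) k [:a, 1:]"
proof -
  let ?L = "coeffwise (map_poly \<phi>) (ln1p_fps [:a, 1:])"
  let ?R = "charR (map_poly \<phi>) [:a, 1:]"
  have lin2: "linear (map_poly \<phi>)" by (rule lin_lift[OF lin])
  have "pd ?R = pd ?L * ?R" unfolding charR_def by (rule pd_exp) (rule L0[OF lin2])
  also have "\<dots> = fps_const (map_poly \<phi> 1) * (fps_X * ?R) - fps_X ^ 2 * (fps_deriv ?L * ?R)"
    by (simp add: pd_Lt algebra_simps)
  also have "fps_deriv ?L * ?R = fps_deriv ?R" by (simp add: R_deriv[OF lin2])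
  finally have e: "pd ?R = fps_const (map_poly \<phi> 1) * (fps_X * ?R) - fps_X ^ 2 * fps_deriv ?R" .
  have "pd ?R $ Suc k = (fps_const (map_poly \<phi> 1) * (fps_X * ?R) - fps_X ^ 2 * fps_deriv ?R) $ Suc k"
    by (simp only: e)
  then show ?thesis
    by (cases k) (simp_all add: pd_def psi_def fps_X_power_mult_nth)
qed

end


lemma scaleR_cancel_nz:
  fixes x :: "'c::real_vector"
  assumes "c *\<^sub>R x = 0" "c \<noteq> 0" shows "x = 0"
  using assms by simp

lemma poly_vanish_set:
  fixes p :: "'c::{real_algebra_1,comm_ring_1} poly"
  shows "finite S \<Longrightarrow> degree p < card S \<Longrightarrow> (\<forall>s\<in>S. poly p (of_real s) = 0) \<Longrightarrow> p = 0"
proof (induction "degree p" arbitrary: p S)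
  case 0
  then obtain r where r: "r \<in> S" by (metis card.empty ex_in_conv less_nat_zero_code)
  from degree0_coeffs[OF 0(1)[symmetric]] obtain c where c: "p = [:c:]" by blast
  with 0(4) r show ?case by auto
next
  case (Suc d)
  then obtain r where r: "r \<in> S" by (metis card.empty ex_in_conv less_nat_zero_code)
  define q where "q = synthetic_div p (of_real r)"
  have pr: "poly p (of_real r) = 0" using Suc.prems r by blast
  have pq: "p = [:- of_real r, 1:] * q"
    using synthetic_div_correct'[of "of_real r" p] pr by (simp add: q_def)
  have dq: "d = degree q" using Suc.hyps(2) by (simp add: q_def degree_synthetic_div)
  have "q = 0"
  proof (rule Suc.hyps(1)[OF dq, of "S - {r}"])
    show "finite (S - {r})" using Suc.prems by simp
    show "degree q < card (S - {r})" using Suc.prems Suc.hyps(2) r dq by simp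
    show "\<forall>s\<in>S - {r}. poly q (of_real s) = 0"
    proof
      fix s assume s: "s \<in> S - {r}"
      have "0 = poly p (of_real s)" using Suc.prems s by simp
      also have "\<dots> = (s - r) *\<^sub>R poly q (of_real s)"
        by (subst pq) (simp add: scaleR_conv_of_real algebra_simps)
      finally show "poly q (of_real s) = 0" using s by simp
    qed
  qed
  then show ?case using pq by simp
qed

lemma poly_vanish:
  fixes p :: "'c::{real_algebra_1,comm_ring_1} poly"
  assumes "\<And>s. poly p (of_real s) = 0" shows "p = 0"
proof (rule poly_vanish_set[of "real ` {..degree p}"])
  have "card (real ` {..degree p}) = Suc (degree p)"
    by (subst card_image) (auto simp: inj_on_def)
  then show "degree p < card (real ` {..degree p})" by simp
qed (use assms in auto)

lemma pdv_eq_0: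
  fixes p :: "'c::{real_algebra_1,comm_ring_1} poly"
  assumes "pdv p = 0" shows "p = [:coeff p 0:]"
proof (rule poly_eqI)
  fix n show "coeff p n = coeff [:coeff p 0:] n"
  proof (cases n)
    case (Suc m)
    have "of_nat (Suc m) * coeff p (Suc m) = 0" using assms by (metis coeff_pdv coeff_0)
    then show ?thesis using Suc of_nat_cancel by auto
  qed simp
qed

lemma pdv_eq:
  fixes p q :: "'c::{real_algebra_1,comm_ring_1} poly"
  assumes "pdv p = pdv q" "poly p 0 = poly q 0" shows "p = q"
proof -
  have "p - q = [:coeff (p - q) 0:]" by (rule pdv_eq_0) (simp add: pdv_diff assms)
  also have "coeff (p - q) 0 = 0" using assms(2) by (simp add: poly_0_coeff_0)
  finally show ?thesis by simp
qed


lemma binom_step: "Suc m * (N choose Suc m) = (N - m) * (N choose m)"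
proof (cases N)
  case 0 then show ?thesis by simp
next
  case (Suc N')
  have "Suc m * (Suc N' choose Suc m) = Suc N' * (N' choose m)" by (rule Suc_times_binomial)
  also have "\<dots> = (Suc N' - m) * (Suc N' choose m)" using binomial_absorb_comp[of "Suc N'" m] by simp
  finally show ?thesis using Suc by simp
qed

lemma smult_sum_right: "smult c (sum f S) = (\<Sum>x\<in>S. smult c (f x))"
  by (induction S rule: infinite_finite_induct) (simp_all add: smult_add_right)

lemma of_nat_poly_mult: "(of_nat m :: 'c::comm_ring_1 poly) * p = smult (of_nat m) p"
  by (simp add: of_nat_poly)

context
  fixes \<phi> :: "'a::{real_algebra_1, comm_ring_1} \<Rightarrow> 'b::{real_algebra_1, comm_ring_1}"
    and n N :: nat and a :: 'a
  assumes lin: "linear \<phi>" and n1: "\<phi> 1 = of_nat n"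
    and polyN: "\<forall>a. \<forall>k>N. psi \<phi> k a = 0"
begin

abbreviation "P k \<equiv> psi (map_poly \<phi>) k [:a, 1:]"

lemma map1: "map_poly \<phi> 1 = of_nat n"
  by (simp add: one_pCons map_poly_pCons phi0'[OF lin] n1 of_nat_poly)

lemma Prec: "pdv (P (Suc k)) = of_nat n * P k - of_nat k * P k"
  using P_rec[OF lin, of k a] by (simp add: map1)

lemma P0: "P 0 = 1" by (simp add: psi_def charR_def exp_fps0_nth0)

lemma Pval: "poly (P k) (of_real s) = psi \<phi> k (a + of_real s)"
  by (rule psi_shift[OF lin])

lemma Pbig: "k > N \<Longrightarrow> P k = 0"
  by (rule poly_vanish) (simp add: Pval polyN)

lemma Pdeg: "k > n \<Longrightarrow> P k = 0"
proof -
  have "\<forall>k. N - i < k \<and> n < k \<longrightarrow> P k = 0" for i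
  proof (induction i)
    case 0 then show ?case using Pbig by auto
  next
    case (Suc i)
    show ?case
    proof (intro allI impI)
      fix k assume k: "N - Suc i < k \<and> n < k"
      show "P k = 0"
      proof (cases "N - i < k")
        case True then show ?thesis using Suc.IH k by blast
      next
        case False
        then have "P (Suc k) = 0" using Suc.IH k by auto
        then have "0 = of_nat n * P k - of_nat k * P k" using Prec[of k] by (simp add: pdv_0)
        then have "of_nat (k - n) * P k = 0" using k
          by (simp add: of_nat_diff algebra_simps)
        moreover obtain m where "k - n = Suc m" using k by (metis Suc_diff_Suc)
        ultimately show ?thesis using of_nat_cancel by metis
      qed
    qed
  qed
  from this[of N] show "k > n \<Longrightarrow> P k = 0" by auto
qed

lemma psi_deg: "k > n \<Longrightarrow> psi \<phi> k a = 0"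
  using Pval[of k 0] Pdeg by simp

definition cc :: "nat \<Rightarrow> 'b" where "cc j = poly (P j) 0"

lemma cc_psi: "cc j = psi \<phi> j a" using Pval[of j 0] by (simp add: cc_def)

lemma Pclosed: "k \<le> n \<Longrightarrow> P k = (\<Sum>j\<le>k. monom (of_nat ((n - j) choose (k - j)) * cc j) (k - j))"
proof (induction k)
  case 0 then show ?case by (simp add: P0 cc_def monom_0 one_pCons)
next
  case (Suc k)
  let ?Q = "\<lambda>k. (\<Sum>j\<le>k. monom (of_nat ((n - j) choose (k - j)) * cc j) (k - j))"
  have IH: "P k = ?Q k" using Suc by simp
  show ?case
  proof (rule pdv_eq)
    have "pdv (P (Suc k)) = smult (of_nat (n - k)) (?Q k)"
      using Suc.prems by (simp add: Prec IH of_nat_diff algebra_simps of_nat_poly_mult flip: smult_diff_left)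
    also have "\<dots> = pdv (?Q (Suc k))"
    proof -
      have "pdv (?Q (Suc k)) = (\<Sum>j\<le>Suc k. monom (of_nat (Suc k - j) * (of_nat ((n - j) choose (Suc k - j)) * cc j)) (Suc k - j - 1))"
        by (simp only: pdv_sum pdv_monom)
      also have "\<dots> = (\<Sum>j\<le>k. monom (of_nat (Suc k - j) * (of_nat ((n - j) choose (Suc k - j)) * cc j)) (Suc k - j - 1))"
        by (simp only: sum.atMost_Suc diff_self_eq_0 of_nat_0 mult_zero_left monom_eq_0 add_0_right)
      also have "\<dots> = (\<Sum>j\<le>k. smult (of_nat (n - k)) (monom (of_nat ((n - j) choose (k - j)) * cc j) (k - j)))"
      proof (rule sum.cong[OF refl])
        fix j assume j: "j \<in> {..k}"
        then have e1: "Suc k - j = Suc (k - j)" "Suc k - j - 1 = k - j" by auto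
        have "Suc (k - j) * ((n - j) choose Suc (k - j)) = (n - j - (k - j)) * ((n - j) choose (k - j))"
          by (rule binom_step)
        also have "n - j - (k - j) = n - k" using j Suc.prems by auto
        finally have e2: "(of_nat (Suc (k - j)) * of_nat ((n - j) choose Suc (k - j)) :: 'b) = of_nat (n - k) * of_nat ((n - j) choose (k - j))"
          by (metis of_nat_mult)
        show "monom (of_nat (Suc k - j) * (of_nat ((n - j) choose (Suc k - j)) * cc j)) (Suc k - j - 1)
            = smult (of_nat (n - k)) (monom (of_nat ((n - j) choose (k - j)) * cc j) (k - j))"
          by (simp only: e1 diff_Suc_1 smult_monom mult.assoc[symmetric] e2)
      qed
      also have "\<dots> = smult (of_nat (n - k)) (?Q k)" by (simp only: smult_sum_right)
      finally show ?thesis by simp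
    qed
    finally show "pdv (P (Suc k)) = pdv (?Q (Suc k))" .
  next
    have "poly (?Q (Suc k)) 0 = (\<Sum>j\<le>Suc k. if j = Suc k then cc j else 0)"
      unfolding poly_sum by (rule sum.cong[OF refl]) (auto simp: poly_monom power_0_left)
    also have "\<dots> = cc (Suc k)" by simp
    finally show "poly (P (Suc k)) 0 = poly (?Q (Suc k)) 0" by (simp add: cc_def)
  qed
qed


lemma sum_P: "(\<Sum>k\<le>n. poly (P k) y) = (\<Sum>j\<le>n. cc j * (y + 1) ^ (n - j))"
proof -
  define g where "g j i = of_nat ((n - j) choose i) * cc j * y ^ i" for j i
  have "(\<Sum>k\<le>n. poly (P k) y) = (\<Sum>k\<le>n. \<Sum>j\<le>k. g j (k - j))"
    by (rule sum.cong[OF refl]) (simp add: Pclosed poly_sum poly_monom g_def)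
  also have "\<dots> = (\<Sum>(j, i)\<in>{(j, i). j + i \<le> n}. g j i)"
    by (rule sum.triangle_reindex_eq[symmetric])
  also have "{(j, i). j + i \<le> n} = Sigma {..n} (\<lambda>j. {..n - j})" by auto
  also have "(\<Sum>(j, i)\<in>Sigma {..n} (\<lambda>j. {..n - j}). g j i) = (\<Sum>j\<le>n. \<Sum>i\<le>n - j. g j i)"
    by (rule sum.Sigma[symmetric]) auto
  also have "\<dots> = (\<Sum>j\<le>n. cc j * (y + 1) ^ (n - j))"
  proof (rule sum.cong[OF refl])
    fix j
    have "(\<Sum>i\<le>n - j. g j i) = cc j * (\<Sum>i\<le>n - j. of_nat ((n - j) choose i) * y ^ i * 1 ^ (n - j - i))"
      by (simp add: g_def sum_distrib_left mult_ac)
    also have "\<dots> = cc j * (y + 1) ^ (n - j)" by (simp only: binomial_ring)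
    finally show "(\<Sum>i\<le>n - j. g j i) = cc j * (y + 1) ^ (n - j)" .
  qed
  finally show ?thesis .
qed

lemma final_formula:
  assumes z: "z \<noteq> 0"
  shows "1 + (\<Sum>k=1..n. psi \<phi> k a * of_real z ^ k)
      = of_real z ^ n * (1 + (\<Sum>k=1..n. psi \<phi> k (of_real (1 / z) + a - 1)))"
proof -
  define s where "s = 1 / z - 1"
  have split: "(\<Sum>k\<le>n. f k) = f 0 + (\<Sum>k=1..n. f k)" for f :: "nat \<Rightarrow> 'b"
    by (simp add: atMost_atLeast0 sum.atLeast_Suc_atMost)
  have h1: "psi \<phi> k (of_real (1 / z) + a - 1) = poly (P k) (of_real s)" for k
  proof -
    have "of_real (1 / z) + a - 1 = a + of_real s" by (simp add: s_def of_real_diff algebra_simps)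
    then show ?thesis by (simp only: Pval)
  qed
  have c0: "cc 0 = 1" by (simp add: cc_def P0)
  have "of_real z ^ n * (1 + (\<Sum>k=1..n. psi \<phi> k (of_real (1 / z) + a - 1)))
      = of_real z ^ n * (\<Sum>k\<le>n. poly (P k) (of_real s))"
    by (simp add: split h1 P0)
  also have "\<dots> = of_real z ^ n * (\<Sum>j\<le>n. cc j * (of_real s + 1) ^ (n - j))"
    by (simp only: sum_P)
  also have "\<dots> = (\<Sum>j\<le>n. cc j * of_real z ^ j)"
    unfolding sum_distrib_left
  proof (rule sum.cong[OF refl])
    fix j assume "j \<in> {..n}"
    then have jn: "j \<le> n" by simp
    have "(of_real s + 1 :: 'b) = of_real (1 / z)" by (simp add: s_def of_real_diff)
    moreover have "z ^ n * (1 / z) ^ (n - j) = z ^ j"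
    proof -
      have "z ^ n = z ^ j * z ^ (n - j)" using jn by (simp flip: power_add)
      then show ?thesis using z by (simp add: power_one_over field_simps)
    qed
    ultimately show "of_real z ^ n * (cc j * (of_real s + 1) ^ (n - j)) = cc j * of_real z ^ j"
      by (metis (no_types, lifting) mult.left_commute of_real_mult of_real_power)
  qed
  also have "\<dots> = 1 + (\<Sum>k=1..n. psi \<phi> k a * of_real z ^ k)"
    by (simp add: split c0 cc_psi psi_def charR_def exp_fps0_nth0)
  finally show ?thesis by simp
qed

end


theorem mainTheorem2:
  fixes \<phi> :: "'a::{real_algebra_1, comm_ring_1} \<Rightarrow> 'b::{real_algebra_1, comm_ring_1}"
    and N :: nat
  assumes conn: "connected_alg TYPE('b)"
    and lin: "linear \<phi>"
    and polyN: "\<forall>a. \<forall>k>N. psi \<phi> k a = 0"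
  shows "\<exists>n::nat. n \<le> N \<and> \<phi> 1 = of_nat n
     \<and> (\<forall>a. \<forall>k>n. psi \<phi> k a = 0)
     \<and> charR \<phi> 1 = (1 + fps_X) ^ n
     \<and> (\<forall>a. \<forall>z::real. z \<noteq> 0 \<longrightarrow>
          1 + (\<Sum>k=1..n. psi \<phi> k a * of_real z ^ k)
          = of_real z ^ n * (1 + (\<Sum>k=1..n. psi \<phi> k (of_real (1 / z) + a - 1))))"
proof -
  have R10: "charR \<phi> 1 $ 0 = 1" by (simp add: charR_def exp_fps0_nth0)
  have cl: "of_nat (fact (Suc N)) * charR \<phi> 1 $ Suc N = (\<Prod>j<Suc N. \<phi> 1 - of_nat j)"
    by (rule ode_closed[OF R1_ode[OF lin] R10])
  have "charR \<phi> 1 $ Suc N = 0" using polyN by (simp add: psi_def)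
  with cl have "(\<Prod>j\<le>N. \<phi> 1 - of_nat j) = 0" by (simp add: lessThan_Suc_atMost)
  then obtain n where n: "n \<le> N" "\<phi> 1 = of_nat n"
    using conn unfolding connected_alg_def by blast
  have R1: "charR \<phi> 1 = (1 + fps_X) ^ n"
    by (rule ode_unique[OF R1_ode[OF lin, unfolded n(2)] binom_ode]) (simp add: R10 fps_nth_power_0)
  show ?thesis
  proof (intro exI conjI allI impI)
    show "n \<le> N" "\<phi> 1 = of_nat n" by (fact n)+
    show "charR \<phi> 1 = (1 + fps_X) ^ n" by (fact R1)
  next
    fix a k assume "n < k"
    then show "psi \<phi> k a = 0" by (rule psi_deg[OF lin n(2) polyN])
  next
    fix a and z :: real assume "z \<noteq> 0"
    then show "1 + (\<Sum>k=1..n. psi \<phi> k a * of_real z ^ k)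
          = of_real z ^ n * (1 + (\<Sum>k=1..n. psi \<phi> k (of_real (1 / z) + a - 1)))"
      by (rule final_formula[OF lin n(2) polyN])
  qed
qed

end
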